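(* Let $X$ be convex and let $f$ be $\alpha$-robustly quasiconvex for some $\alpha>0$, with $X\subset\operatorname{dom}f$. Then $\mathrm{Sol}(\cdot)$ is lower semicontinuous at $0$ if and only if (a) $\mathrm{Sol}(0)$ is a singleton and (b) $X^\infty\cap\mathcal{K}_q(f)=\{0\}$.
   Context: Standing assumptions: $f:\mathbb{R}^n\to\mathbb{R}\cup\{\pm\infty\}$ is proper (never $-\infty$ and finite at some point) and lower semicontinuous; $X\subset\mathbb{R}^n$ is a nonempty closed set with $\operatorname{dom}f\cap X$ unbounded. $f$ is $\alpha$-robustly quasiconvex ($\alpha\ge0$) if $x\mapsto f(x)+\langle u,x\rangle$ is quasiconvex for every $u$ in the open ball $\mathbb{B}_\alpha$ of radius $\alpha$ about $0$ (quasiconvex: $g(\lambda x+(1-\lambda)y)\le\max\{g(x),g(y)\}$ for $x,y\in\operatorname{dom}g$, $\lambda\in[0,1]$). $X^\infty=\{u:\exists t_k\to+\infty,\ \exists x_k\in X,\ x_k/t_k\to u\}$. $f^\infty_q(u)=\sup_{x\in\operatorname{dom}f}\sup_{t>0}\frac{f(x+tu)-f(x)}{t}$, $\mathcal{K}_q(f)=\{d: f^\infty_q(d)\le0\}$. $f_u(x)=f(x)-\langle u,x\rangle$, $\mathrm{Sol}(u)=\{x\in X: f_u(x)\le f_u(y)\ \forall y\in X\}$. A set-valued map $F$ is lower semicontinuous at $\bar u$ if $F(\bar u)\ne\emptyset$ and for every open $V$ with $F(\bar u)\cap V\ne\emptyset$ there is a neighborhood $U$ of $\bar u$ with $F(u)\cap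 V\ne\emptyset$ for all $u\in U$. *)

theory Defs
  imports "HOL-Analysis.Analysis" "HOL-Library.Extended_Real"
begin

definition proper_fun :: "('a \<Rightarrow> ereal) \<Rightarrow> bool" where
  "proper_fun f \<longleftrightarrow> (\<forall>x. f x \<noteq> -\<infinity>) \<and> (\<exists>x. f x \<noteq> \<infinity>)"

definition lsc_fun :: "('a::topological_space \<Rightarrow> ereal) \<Rightarrow> bool" where
  "lsc_fun f \<longleftrightarrow> (\<forall>x. f x \<le> Liminf (at x) f)"

definition edom :: "('a \<Rightarrow> ereal) \<Rightarrow> 'a set" where
  "edom f = {x. f x < \<infinity>}"

definition quasiconvex_fun :: "('a::real_vector \<Rightarrow> ereal) \<Rightarrow> bool" where
  "quasiconvex_fun g \<longleftrightarrow>
     (\<forall>x\<in>edom g. \<forall>y\<in>edom g. \<forall>l::real. 0 \<le> l \<and> l \<le> 1 \<longrightarrow>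
        g (l *\<^sub>R x + (1 - l) *\<^sub>R y) \<le> max (g x) (g y))"

definition robustly_quasiconvex :: "real \<Rightarrow> ('a::real_inner \<Rightarrow> ereal) \<Rightarrow> bool" where
  "robustly_quasiconvex \<alpha> f \<longleftrightarrow> \<alpha> \<ge> 0 \<and>
     (\<forall>u\<in>ball 0 \<alpha>. quasiconvex_fun (\<lambda>x. f x + ereal (inner u x)))"

definition asymptotic_cone :: "'a::real_normed_vector set \<Rightarrow> 'a set" where
  "asymptotic_cone X = {u. \<exists>t x. filterlim t at_top sequentially \<and> (\<forall>k. x k \<in> X) \<and>
        ((\<lambda>k. (1 / t k) *\<^sub>R x k) \<longlonglongrightarrow> u)}"

definition q_asymptotic :: "('a::real_vector \<Rightarrow> ereal) \<Rightarrow> 'a \<Rightarrow> ereal" where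
  "q_asymptotic f u = (SUP x\<in>edom f. SUP t\<in>{0::real<..}. (f (x + t *\<^sub>R u) - f x) / ereal t)"

definition Kq :: "('a::real_vector \<Rightarrow> ereal) \<Rightarrow> 'a set" where
  "Kq f = {d. q_asymptotic f d \<le> 0}"

definition f_tilt :: "('a::real_inner \<Rightarrow> ereal) \<Rightarrow> 'a \<Rightarrow> 'a \<Rightarrow> ereal" where
  "f_tilt f u x = f x - ereal (inner u x)"

definition Sol :: "('a::real_inner \<Rightarrow> ereal) \<Rightarrow> 'a set \<Rightarrow> 'a \<Rightarrow> 'a set" where
  "Sol f X u = {x\<in>X. \<forall>y\<in>X. f_tilt f u x \<le> f_tilt f u y}"

definition lsc_setvalued_at :: "('b::topological_space \<Rightarrow> 'a::topological_space set) \<Rightarrow> 'b \<Rightarrow> bool" where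
  "lsc_setvalued_at F ub \<longleftrightarrow> F ub \<noteq> {} \<and>
     (\<forall>V. open V \<and> F ub \<inter> V \<noteq> {} \<longrightarrow>
        (\<exists>U. open U \<and> ub \<in> U \<and> (\<forall>u\<in>U. F u \<inter> V \<noteq> {})))"

end

theory Submission
  imports Defs
begin


definition lscpt :: "('a::topological_space \<Rightarrow> ereal) \<Rightarrow> bool" where
  "lscpt f \<longleftrightarrow> (\<forall>y c. c < f y \<longrightarrow> (\<exists>N. open N \<and> y \<in> N \<and> (\<forall>w\<in>N. c < f w)))"

lemma lsc_lscpt: assumes "lsc_fun f" shows "lscpt f"
  unfolding lscpt_def
proof (intro allI impI)
  fix y c assume c: "c < f y"
  then have "c < Liminf (at y) f" using assms unfolding lsc_fun_def by (meson order_less_le_trans)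
  then have "eventually (\<lambda>x. c < f x) (at y)" by (rule less_LiminfD)
  then obtain S where "open S" "y \<in> S" "\<forall>x\<in>S. x \<noteq> y \<longrightarrow> c < f x"
    unfolding eventually_at_topological by blast
  then show "\<exists>N. open N \<and> y \<in> N \<and> (\<forall>w\<in>N. c < f w)" using c by metis
qed

lemma lscpt_tilt:
  fixes f :: "'a::real_inner \<Rightarrow> ereal"
  assumes "lscpt f" shows "lscpt (f_tilt f u)"
  unfolding lscpt_def
proof (intro allI impI)
  fix y c assume c: "c < f_tilt f u y"
  obtain e where e: "c < ereal e" "ereal e < f_tilt f u y" using ereal_dense2[OF c] by blast
  have "ereal (e + inner u y) < f y" using e(2) unfolding f_tilt_def
    by (cases "f y") auto
  then obtain e2 where e2: "e + inner u y < e2" "ereal e2 < f y" using ereal_dense2 by (metis less_ereal.simps(1))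
  define \<eta> where "\<eta> = e2 - e - inner u y"
  have eta: "\<eta> > 0" using e2 unfolding \<eta>_def by simp
  obtain N1 where N1: "open N1" "y \<in> N1" "\<forall>w\<in>N1. ereal e2 < f w" using assms e2(2) unfolding lscpt_def by blast
  define r where "r = \<eta> / (norm u + 1)"
  have r: "r > 0" unfolding r_def using eta by (simp add: add_nonneg_pos)
  show "\<exists>N. open N \<and> y \<in> N \<and> (\<forall>w\<in>N. c < f_tilt f u w)"
  proof (intro exI conjI ballI)
    show "open (N1 \<inter> ball y r)" using N1 by auto
    show "y \<in> N1 \<inter> ball y r" using N1 r by auto
    fix w assume w: "w \<in> N1 \<inter> ball y r"
    have "inner u w - inner u y = inner u (w - y)" by (simp add: inner_diff_right)
    also have "\<dots> \<le> norm u * norm (w - y)" using Cauchy_Schwarz_ineq2 by (meson abs_le_D1 norm_cauchy_schwarz)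
    also have "\<dots> \<le> norm u * r"
      using w by (intro mult_left_mono) (auto simp: dist_norm norm_minus_commute)
    also have "\<dots> < (norm u + 1) * r" using r by (simp add: distrib_right)
    also have "\<dots> = \<eta>" proof -
      have "norm u + 1 > 0" using norm_ge_zero[of u] by linarith
      thus ?thesis unfolding r_def by simp
    qed
    finally have "inner u w < e2 - e" unfolding \<eta>_def by linarith
    hence "ereal e < ereal (e2 - inner u w)" by simp
    also have "\<dots> \<le> f w - ereal (inner u w)" using N1(3) w
      by (metis IntD1 ereal_minus(1) ereal_minus_mono order_less_imp_le order_refl)
    finally show "c < f_tilt f u w" using e(1) unfolding f_tilt_def by simp
  qed
qed

lemma lscpt_seq:
  fixes f :: "'a::metric_space \<Rightarrow> ereal"
  assumes "lscpt f" "p \<longlonglongrightarrow> a" "eventually (\<lambda>k. f (p k) \<le> ereal (r k)) sequentially" "r \<longlonglongrightarrow> r0"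
  shows "f a \<le> ereal r0"
proof (rule ccontr)
  assume "\<not> ?thesis"
  hence "ereal r0 < f a" by simp
  then obtain c where c: "ereal r0 < ereal c" "ereal c < f a" using ereal_dense2 by (metis less_ereal.simps(1))
  then obtain N where N: "open N" "a \<in> N" "\<forall>w\<in>N. ereal c < f w" using assms(1) unfolding lscpt_def by blast
  have "eventually (\<lambda>k. p k \<in> N) sequentially" using assms(2) N by (simp add: topological_tendstoD)
  moreover have "eventually (\<lambda>k. r k < c) sequentially" using assms(4) c(1) by (simp add: order_tendstoD(2))
  ultimately have "eventually (\<lambda>k. False) sequentially" using assms(3)
  proof eventually_elim
    case (elim k)
    have "ereal c < ereal (r k)" using N(3) elim by (meson order_less_le_trans)
    thus False using elim by simp
  qed
  thus False by simp
qed

lemma lscpt_min: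
  fixes h :: "'a::topological_space \<Rightarrow> ereal"
  assumes "lscpt h" "compact K" "K \<noteq> {}"
  shows "\<exists>y\<in>K. \<forall>w\<in>K. h y \<le> h w"
proof (rule ccontr)
  assume nmin: "\<not> ?thesis"
  define m where "m = (INF w\<in>K. h w)"
  define B where "B c = \<Union>{N. open N \<and> (\<forall>w\<in>N. c < h w)}" for c
  have "\<forall>y\<in>K. m < h y"
  proof
    fix y assume y: "y \<in> K"
    have "m \<le> h y" unfolding m_def using y by (rule INF_lower)
    moreover have "m \<noteq> h y"
    proof
      assume "m = h y"
      then have "\<forall>w\<in>K. h y \<le> h w" unfolding m_def by (metis INF_lower)
      thus False using nmin y by blast
    qed
    ultimately show "m < h y" by simp
  qed
  hence cov: "K \<subseteq> \<Union>(B ` {c. m < c})"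
  proof -
    { fix y assume y: "y \<in> K"
      with \<open>\<forall>y\<in>K. m < h y\<close> obtain c where c: "m < c" "c < h y" using ereal_dense2 by (metis less_ereal.simps(1) ereal_dense2)
      then obtain N where "open N" "y \<in> N" "\<forall>w\<in>N. c < h w" using assms(1) unfolding lscpt_def by blast
      then have "y \<in> B c" unfolding B_def by blast
      with c have "y \<in> \<Union>(B ` {c. m < c})" by blast }
    thus ?thesis by blast
  qed
  have opn: "\<forall>c\<in>{c. m < c}. open (B c)" unfolding B_def by auto
  obtain D where D: "D \<subseteq> {c. m < c}" "finite D" "K \<subseteq> \<Union>(B ` D)"
    using compactE_image[OF assms(2) _ cov] opn by metis
  have "D \<noteq> {}" using D(3) assms(3) by auto
  define c0 where "c0 = Min D"
  have "c0 \<in> D" unfolding c0_def using D(2) \<open>D \<noteq> {}\<close> by simp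
  hence "m < c0" using D(1) by auto
  have "\<forall>w\<in>K. c0 \<le> h w"
  proof
    fix w assume "w \<in> K"
    then obtain c where "c \<in> D" "w \<in> B c" using D(3) by auto
    then have "c < h w" unfolding B_def by auto
    moreover have "c0 \<le> c" unfolding c0_def using D(2) \<open>c \<in> D\<close> by simp
    ultimately show "c0 \<le> h w" by simp
  qed
  hence "c0 \<le> m" unfolding m_def by (simp add: le_INF_iff)
  thus False using \<open>m < c0\<close> by simp
qed
lemma recession:
  fixes X :: "'a::real_normed_vector set"
  assumes "closed X" "convex X" "x0 \<in> X" "d \<in> asymptotic_cone X" "t \<ge> 0"
  shows "x0 + t *\<^sub>R d \<in> X"
proof -
  obtain T x where T: "filterlim T at_top sequentially" and x: "\<forall>k. x k \<in> X"
    and lim: "(\<lambda>k. (1 / T k) *\<^sub>R x k) \<longlonglongrightarrow> d"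
    using assms(4) unfolding asymptotic_cone_def by blast
  define q where "q k = x0 - (t / T k) *\<^sub>R x0 + t *\<^sub>R ((1 / T k) *\<^sub>R x k)" for k
  have t0: "(\<lambda>k. t / T k) \<longlonglongrightarrow> 0"
    by (rule tendsto_divide_0[OF tendsto_const filterlim_at_top_imp_at_infinity[OF T]])
  have "q \<longlonglongrightarrow> x0 - 0 *\<^sub>R x0 + t *\<^sub>R d"
    unfolding q_def by (intro tendsto_intros t0 lim)
  hence ql: "q \<longlonglongrightarrow> x0 + t *\<^sub>R d" by simp
  have "eventually (\<lambda>k. t + 1 \<le> T k) sequentially" using T unfolding filterlim_at_top by blast
  hence "eventually (\<lambda>k. q k \<in> X) sequentially"
  proof eventually_elim
    case (elim k)
    hence Tp: "T k > 0" using assms(5) by linarith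
    have l: "0 \<le> t / T k" "t / T k \<le> 1" using elim assms(5) Tp by (auto simp: field_simps)
    have "q k = (1 - t / T k) *\<^sub>R x0 + (t / T k) *\<^sub>R x k"
      unfolding q_def by (simp add: scaleR_diff_left)
    also have "\<dots> \<in> X" using l by (intro convexD[OF assms(2) assms(3) x[rule_format]]) auto
    finally show ?case .
  qed
  thus ?thesis using Lim_in_closed_set[OF assms(1) _ _ ql] by simp
qed
lemma edom_real: assumes "proper_fun f" "x \<in> edom f" shows "\<exists>a. f x = ereal a"
  using assms unfolding proper_fun_def edom_def by (cases "f x") auto

lemma qa_le0_D:
  fixes f :: "'a::real_vector \<Rightarrow> ereal"
  assumes "proper_fun f" "q_asymptotic f d \<le> 0" "x \<in> edom f" "t > 0"
  shows "f (x + t *\<^sub>R d) \<le> f x"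
proof -
  have "(f (x + t *\<^sub>R d) - f x) / ereal t \<le> (SUP t\<in>{0::real<..}. (f (x + t *\<^sub>R d) - f x) / ereal t)"
    using assms(4) by (intro SUP_upper) auto
  also have "\<dots> \<le> q_asymptotic f d" unfolding q_asymptotic_def using assms(3)
    by (rule SUP_upper[where f = "\<lambda>x. SUP t\<in>{0::real<..}. (f (x + t *\<^sub>R d) - f x) / ereal t"])
  finally have le: "(f (x + t *\<^sub>R d) - f x) / ereal t \<le> 0" using assms(2) by simp
  obtain a where a: "f x = ereal a" using edom_real[OF assms(1,3)] by blast
  have nm: "f (x + t *\<^sub>R d) \<noteq> -\<infinity>" using assms(1) unfolding proper_fun_def by blast
  show ?thesis
  proof (cases "f (x + t *\<^sub>R d)")
    case (real b)
    with le a assms(4) have "(b - a) / t \<le> 0" by simp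
    hence "b - a \<le> 0" using assms(4) by (simp add: divide_le_0_iff)
    thus ?thesis using real a by simp
  next
    case PInf
    with le a assms(4) show ?thesis by simp
  next
    case MInf with nm show ?thesis by simp
  qed
qed

lemma qa_le0_I:
  fixes f :: "'a::real_vector \<Rightarrow> ereal"
  assumes "proper_fun f" "\<And>x t. x \<in> edom f \<Longrightarrow> t > 0 \<Longrightarrow> f (x + t *\<^sub>R d) \<le> f x"
  shows "q_asymptotic f d \<le> 0"
  unfolding q_asymptotic_def
proof (intro SUP_least)
  fix x t assume x: "x \<in> edom f" and t: "t \<in> {0::real<..}"
  obtain a where a: "f x = ereal a" using edom_real[OF assms(1) x] by blast
  have le: "f (x + t *\<^sub>R d) \<le> ereal a" using assms(2)[OF x] t a by auto
  have nm: "f (x + t *\<^sub>R d) \<noteq> -\<infinity>" using assms(1) unfolding proper_fun_def by blast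
  then obtain b where b: "f (x + t *\<^sub>R d) = ereal b" using le by (cases "f (x + t *\<^sub>R d)") auto
  have "(b - a) / t \<le> 0" using le b t by (simp add: divide_le_0_iff)
  thus "(f (x + t *\<^sub>R d) - f x) / ereal t \<le> 0" using a b t by simp
qed

lemma f_tilt_real: assumes "proper_fun f" "x \<in> edom f"
  shows "\<exists>a. f x = ereal a \<and> f_tilt f u x = ereal (a - inner u x)"
  using edom_real[OF assms] unfolding f_tilt_def by auto

lemma Sol0_iff: "x \<in> Sol f X 0 \<longleftrightarrow> x \<in> X \<and> (\<forall>y\<in>X. f x \<le> f y)"
  unfolding Sol_def f_tilt_def by (simp add: zero_ereal_def[symmetric])

lemma forward:
  fixes f :: "'a::euclidean_space \<Rightarrow> ereal"
  assumes pf: "proper_fun f" and cX: "closed X" and cvX: "convex X" and Xd: "X \<subseteq> edom f"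
    and lsc: "lsc_setvalued_at (Sol f X) 0"
  shows "(\<exists>z. Sol f X 0 = {z}) \<and> asymptotic_cone X \<inter> Kq f = {0}"
proof
  have ne: "Sol f X 0 \<noteq> {}" using lsc unfolding lsc_setvalued_at_def by blast
  then obtain x1 where x1: "x1 \<in> Sol f X 0" by blast
  have x1X: "x1 \<in> X" and x1m: "\<forall>y\<in>X. f x1 \<le> f y" using x1 Sol0_iff by blast+
  have uniq: "x2 = x1" if x2: "x2 \<in> Sol f X 0" for x2
  proof (rule ccontr)
    assume neq: "x2 \<noteq> x1"
    define d where "d = x1 - x2"
    define nd where "nd = norm d"
    have nd: "nd > 0" using neq unfolding nd_def d_def by simp
    have "Sol f X 0 \<inter> ball x2 (nd/2) \<noteq> {}" using x2 nd by auto
    then obtain U where U: "open U" "0 \<in> U" "\<forall>u\<in>U. Sol f X u \<inter> ball x2 (nd/2) \<noteq> {}"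
      using lsc unfolding lsc_setvalued_at_def by (meson open_ball)
    obtain e where e: "e > 0" "ball 0 e \<subseteq> U" using U(1,2) open_contains_ball by blast
    define \<epsilon> where "\<epsilon> = e / (2 * nd)"
    have eps: "\<epsilon> > 0" unfolding \<epsilon>_def using e nd by simp
    define u where "u = \<epsilon> *\<^sub>R d"
    have "norm u = e / 2" unfolding u_def \<epsilon>_def using e nd by (simp add: nd_def[symmetric])
    hence "u \<in> U" using e by auto
    then obtain y where y: "y \<in> Sol f X u" "y \<in> ball x2 (nd/2)" using U(3) by blast
    have yX: "y \<in> X" and ym: "f_tilt f u y \<le> f_tilt f u x1" using y(1) x1X unfolding Sol_def by auto
    obtain a where a: "f x1 = ereal a" "f_tilt f u x1 = ereal (a - inner u x1)"
      using f_tilt_real[OF pf] x1X Xd by blast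
    obtain b where b: "f y = ereal b" "f_tilt f u y = ereal (b - inner u y)"
      using f_tilt_real[OF pf] yX Xd by blast
    have "a \<le> b" using x1m yX a b by auto
    moreover have "b - inner u y \<le> a - inner u x1" using ym a b by simp
    ultimately have "\<epsilon> * inner d x1 \<le> \<epsilon> * inner d y" unfolding u_def by simp
    hence i1: "0 \<le> inner d (y - x1)" using eps by (simp add: inner_diff_right)
    have h1: "inner d (y - x1) = inner d (y - x2) - inner d d" unfolding d_def by (simp add: inner_diff_right)
    have h2: "inner d d = nd * nd" unfolding nd_def by (simp add: power2_eq_square[symmetric] power2_norm_eq_inner)
    have h3: "inner d (y - x2) \<le> nd * norm (y - x2)" unfolding nd_def by (meson Cauchy_Schwarz_ineq2 abs_le_D1 norm_cauchy_schwarz)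
    have h4: "nd * norm (y - x2) < nd * (nd/2)" using y(2) nd by (simp add: dist_norm norm_minus_commute)
    have h5: "nd * (nd/2) < nd * nd" using nd by simp
    show False using i1 h1 h2 h3 h4 h5 by linarith
  qed
  show "\<exists>z. Sol f X 0 = {z}" using x1 uniq by blast
  show "asymptotic_cone X \<inter> Kq f = {0}"
  proof (rule ccontr)
    assume "asymptotic_cone X \<inter> Kq f \<noteq> {0}"
    moreover have "0 \<in> asymptotic_cone X \<inter> Kq f"
    proof
      show "0 \<in> Kq f" unfolding Kq_def using qa_le0_I[OF pf, of 0] by simp
      show "0 \<in> asymptotic_cone X" unfolding asymptotic_cone_def
      proof (intro CollectI exI conjI)
        show "filterlim real at_top sequentially" by (rule filterlim_real_sequentially)
        show "\<forall>k. (\<lambda>_. x1) k \<in> X" using x1X by simp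
        show "(\<lambda>k. (1 / real k) *\<^sub>R (\<lambda>_. x1) k) \<longlonglongrightarrow> 0"
          using tendsto_scaleR[OF lim_const_over_n[of 1] tendsto_const[of x1]] by simp
      qed
    qed
    ultimately obtain d where d: "d \<in> asymptotic_cone X" "d \<in> Kq f" "d \<noteq> 0" by blast
    define nd where "nd = norm d"
    have nd: "nd > 0" using d(3) unfolding nd_def by simp
    have "Sol f X 0 \<inter> UNIV \<noteq> {}" using ne by simp
    then obtain U where U: "open U" "0 \<in> U" "\<forall>u\<in>U. Sol f X u \<inter> UNIV \<noteq> {}"
      using lsc unfolding lsc_setvalued_at_def by (meson open_UNIV)
    obtain e where e: "e > 0" "ball 0 e \<subseteq> U" using U(1,2) open_contains_ball by blast
    define \<epsilon> where "\<epsilon> = e / (2 * nd)"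
    have eps: "\<epsilon> > 0" unfolding \<epsilon>_def using e nd by simp
    define u where "u = \<epsilon> *\<^sub>R d"
    have "norm u = e / 2" unfolding u_def \<epsilon>_def using e nd by (simp add: nd_def[symmetric])
    hence "u \<in> U" using e by auto
    then obtain y where y: "y \<in> Sol f X u" using U(3) by blast
    have yX: "y \<in> X" using y unfolding Sol_def by auto
    obtain a where a: "f x1 = ereal a" "f_tilt f u x1 = ereal (a - inner u x1)"
      using f_tilt_real[OF pf] x1X Xd by blast
    obtain b where b: "f y = ereal b" "f_tilt f u y = ereal (b - inner u y)"
      using f_tilt_real[OF pf] yX Xd by blast
    have ud: "inner u d = \<epsilon> * (nd * nd)" unfolding u_def nd_def
      by (simp add: power2_eq_square[symmetric] power2_norm_eq_inner)
    have pos: "\<epsilon> * (nd * nd) > 0" using eps nd by simp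
    define t where "t = (\<bar>b - inner u y - a + inner u x1\<bar> + 1) / (\<epsilon> * (nd * nd))"
    have t: "t > 0" unfolding t_def using pos by (simp add: add_nonneg_pos)
    have tt: "t * (\<epsilon> * (nd * nd)) = \<bar>b - inner u y - a + inner u x1\<bar> + 1"
    proof -
      have gen: "\<And>Q P::real. P > 0 \<Longrightarrow> Q / P * P = Q" by simp
      show ?thesis unfolding t_def by (rule gen[OF pos])
    qed
    define p where "p = x1 + t *\<^sub>R d"
    have pX: "p \<in> X" unfolding p_def using recession[OF cX cvX x1X d(1)] t by simp
    have fp: "f p \<le> f x1" unfolding p_def
      using qa_le0_D[OF pf _ _ t] d(2) x1X Xd unfolding Kq_def by auto
    obtain c where c: "f p = ereal c" "f_tilt f u p = ereal (c - inner u p)"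
      using f_tilt_real[OF pf] pX Xd by blast
    have "c \<le> a" using fp a c by simp
    moreover have "b - inner u y \<le> c - inner u p" using y pX b c unfolding Sol_def by auto
    moreover have "inner u p = inner u x1 + t * (\<epsilon> * (nd * nd))"
      unfolding p_def using ud by (simp add: inner_add_right)
    ultimately show False using tt by linarith
  qed
qed
lemma quasi_step:
  fixes f :: "'a::euclidean_space \<Rightarrow> ereal"
  assumes pf: "proper_fun f" and lp: "lscpt f" and rq: "robustly_quasiconvex \<alpha> f"
    and Xd: "X \<subseteq> edom f"
    and Y: "\<forall>k. Y k \<in> X" and Nd: "N = (\<lambda>k. norm (Y k))" and Nt: "filterlim N at_top sequentially"
    and Wd: "(\<lambda>k. (1 / N k) *\<^sub>R Y k) \<longlonglongrightarrow> d" and nd: "norm d = 1"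
    and Ul: "U \<longlonglongrightarrow> 0"
    and hyp: "\<forall>k. f_tilt f (U k) (Y k) \<le> f_tilt f (U k) z" and zX: "z \<in> X"
    and x: "x \<in> edom f" and t: "t > 0" and beta: "0 < \<beta>" "\<beta> < \<alpha>" and fx: "f x = ereal fx"
  shows "f (x + t *\<^sub>R d) \<le> ereal (fx + \<beta> * t)"
proof -
  define W where "W k = (1 / N k) *\<^sub>R Y k" for k
  have Wl: "W \<longlonglongrightarrow> d" using Wd unfolding W_def .
  define v where "v = (-\<beta>) *\<^sub>R d"
  have "norm v = \<beta>" unfolding v_def using nd beta by simp
  hence "v \<in> ball 0 \<alpha>" using beta by simp
  hence qc: "quasiconvex_fun (\<lambda>w. f w + ereal (inner v w))" using rq unfolding robustly_quasiconvex_def by blast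
  define g where "g w = f w + ereal (inner v w)" for w
  have eg: "edom g = edom f" unfolding edom_def g_def by auto
  obtain fz where fz: "f z = ereal fz" using edom_real[OF pf] zX Xd by blast
  define fY where "fY k = real_of_ereal (f (Y k))" for k
  have fY: "f (Y k) = ereal (fY k)" for k
  proof -
    obtain a where "f (Y k) = ereal a" using edom_real[OF pf, of "Y k"] Y Xd by auto
    thus ?thesis unfolding fY_def by simp
  qed
  have hr: "fY k - inner (U k) (Y k) \<le> fz - inner (U k) z" for k
    using hyp[rule_format, of k] fY[of k] fz unfolding f_tilt_def by simp
  define E where "E k = (fz - fx - inner (U k) z + \<beta> * inner d x) / N k + inner (U k) (W k) - \<beta> * inner d (W k)" for k
  have A: "(\<lambda>k. fz - fx - inner (U k) z + \<beta> * inner d x) \<longlonglongrightarrow> fz - fx - inner 0 z + \<beta> * inner d x"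
    by (intro tendsto_intros Ul)
  have A0: "(\<lambda>k. (fz - fx - inner (U k) z + \<beta> * inner d x) / N k) \<longlonglongrightarrow> 0"
    by (rule tendsto_divide_0[OF A filterlim_at_top_imp_at_infinity[OF Nt]])
  have "E \<longlonglongrightarrow> 0 + inner 0 d - \<beta> * inner d d" unfolding E_def
    by (intro tendsto_intros A0 Ul Wl)
  moreover have "inner d d = 1" using nd by (simp add: power2_norm_eq_inner[symmetric])
  ultimately have El: "E \<longlonglongrightarrow> - \<beta>" by simp
  have evE: "eventually (\<lambda>k. E k < 0) sequentially" using order_tendstoD(2)[OF El] beta by simp
  have evN: "eventually (\<lambda>k. t \<le> N k) sequentially" using Nt unfolding filterlim_at_top by blast
  define p where "p k = x - (t / N k) *\<^sub>R x + t *\<^sub>R W k" for k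
  define r where "r k = fx + inner v x - inner v (p k)" for k
  have t0: "(\<lambda>k. t / N k) \<longlonglongrightarrow> 0"
    by (rule tendsto_divide_0[OF tendsto_const filterlim_at_top_imp_at_infinity[OF Nt]])
  have "p \<longlonglongrightarrow> x - 0 *\<^sub>R x + t *\<^sub>R d" unfolding p_def by (intro tendsto_intros t0 Wl)
  hence pl: "p \<longlonglongrightarrow> x + t *\<^sub>R d" by simp
  have rl: "r \<longlonglongrightarrow> fx + inner v x - inner v (x + t *\<^sub>R d)" unfolding r_def by (intro tendsto_intros pl)
  have ev: "eventually (\<lambda>k. f (p k) \<le> ereal (r k)) sequentially"
    using evE evN
  proof eventually_elim
    case (elim k)
    have Np: "N k > 0" using elim t by linarith
    have EN: "E k * N k = fz - fx - inner (U k) z + \<beta> * inner d x + inner (U k) (Y k) - \<beta> * inner d (Y k)"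
      unfolding E_def W_def using Np by (simp add: field_simps)
    have "E k * N k < 0" using elim(1) Np by (simp add: mult_neg_pos)
    hence gy: "fY k + inner v (Y k) \<le> fx + inner v x" using hr[of k] EN unfolding v_def by simp
    have gle: "g (Y k) \<le> g x" unfolding g_def using gy fY fx by simp
    define l where "l = t / N k"
    have l: "0 \<le> l" "l \<le> 1" unfolding l_def using Np t elim(2) by auto
    have Yd: "Y k \<in> edom g" "x \<in> edom g" using eg Y Xd x by auto
    have "g (l *\<^sub>R Y k + (1 - l) *\<^sub>R x) \<le> max (g (Y k)) (g x)"
      using qc Yd l unfolding quasiconvex_fun_def g_def[abs_def] by blast
    also have "\<dots> = g x" using gle by simp
    also have "l *\<^sub>R Y k + (1 - l) *\<^sub>R x = p k"
      unfolding p_def l_def W_def by (simp add: scaleR_diff_left)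
    finally have gp: "f (p k) + ereal (inner v (p k)) \<le> ereal (fx + inner v x)" unfolding g_def using fx by simp
    show ?case
    proof (cases "f (p k)")
      case (real c) thus ?thesis using gp unfolding r_def by simp
    next
      case PInf thus ?thesis using gp by simp
    next
      case MInf thus ?thesis using pf unfolding proper_fun_def by blast
    qed
  qed
  have "f (x + t *\<^sub>R d) \<le> ereal (fx + inner v x - inner v (x + t *\<^sub>R d))"
    by (rule lscpt_seq[OF lp pl ev rl])
  moreover have "inner v x - inner v (x + t *\<^sub>R d) = \<beta> * t"
    unfolding v_def using \<open>inner d d = 1\<close> by (simp add: inner_add_right)
  hence "fx + inner v x - inner v (x + t *\<^sub>R d) = fx + \<beta> * t" by linarith
  ultimately show ?thesis by metis
qed

lemma bounded_sublevel:
  fixes f :: "'a::euclidean_space \<Rightarrow> ereal"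
  assumes pf: "proper_fun f" and lp: "lscpt f" and rq: "robustly_quasiconvex \<alpha> f" and al: "\<alpha> > 0"
    and Xd: "X \<subseteq> edom f" and zX: "z \<in> X" and K: "asymptotic_cone X \<inter> Kq f = {0}"
  shows "\<exists>\<delta>>0. \<exists>R. \<forall>u y. norm u < \<delta> \<longrightarrow> y \<in> X \<longrightarrow> f_tilt f u y \<le> f_tilt f u z \<longrightarrow> norm y \<le> R"
proof (rule ccontr)
  assume "\<not> ?thesis"
  hence "\<forall>k::nat. \<exists>u y. norm u < 1 / real (Suc k) \<and> y \<in> X \<and> f_tilt f u y \<le> f_tilt f u z \<and> norm y > real k"
    by (metis not_le of_nat_0_less_iff zero_less_Suc zero_less_divide_1_iff)
  then obtain u y where uy: "\<And>k. norm (u k) < 1 / real (Suc k)" "\<And>k. y k \<in> X"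
    "\<And>k. f_tilt f (u k) (y k) \<le> f_tilt f (u k) z" "\<And>k. norm (y k) > real k"
    by metis
  have ny: "norm (y k) > 0" for k using uy(4)[of k] by linarith
  define W where "W k = (1 / norm (y k)) *\<^sub>R y k" for k
  have "W k \<in> sphere 0 1" for k unfolding W_def using ny[of k] by simp
  then obtain d r where d: "d \<in> sphere 0 1" and r: "strict_mono r" and Wr: "(W \<circ> r) \<longlonglongrightarrow> d"
    using seq_compactE[OF compact_imp_seq_compact[OF compact_sphere]] by metis
  have nd: "norm d = 1" using d by simp
  define Y where "Y k = y (r k)" for k
  define U where "U k = u (r k)" for k
  define N where "N k = norm (Y k)" for k
  have Ul0: "u \<longlonglongrightarrow> 0" by (rule LIMSEQ_norm_0) (use uy(1) in auto)
  have Ul: "U \<longlonglongrightarrow> 0" using LIMSEQ_subseq_LIMSEQ[OF Ul0 r] unfolding U_def comp_def .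
  have "real k \<le> N k" for k
  proof -
    have "real k \<le> real (r k)" using seq_suble[OF r] by simp
    also have "\<dots> < N k" unfolding N_def Y_def using uy(4) by simp
    finally show ?thesis by simp
  qed
  hence Nt: "filterlim N at_top sequentially"
    by (intro filterlim_at_top_mono[OF filterlim_real_sequentially]) auto
  have Wd: "(\<lambda>k. (1 / N k) *\<^sub>R Y k) \<longlonglongrightarrow> d" using Wr unfolding W_def N_def Y_def comp_def .
  have YX: "\<forall>k. Y k \<in> X" unfolding Y_def using uy(2) by simp
  have hyp: "\<forall>k. f_tilt f (U k) (Y k) \<le> f_tilt f (U k) z" unfolding U_def Y_def using uy(3) by simp
  have Neq: "N = (\<lambda>k. norm (Y k))" by (simp add: N_def fun_eq_iff)
  have dc: "d \<in> asymptotic_cone X" unfolding asymptotic_cone_def using Nt YX Wd by blast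
  have "q_asymptotic f d \<le> 0"
  proof (rule qa_le0_I[OF pf])
    fix x t assume x: "x \<in> edom f" and t: "(t::real) > 0"
    obtain fx where fx: "f x = ereal fx" using edom_real[OF pf x] by blast
    have b: "f (x + t *\<^sub>R d) \<le> ereal (fx + \<beta> * t)" if "0 < \<beta>" "\<beta> < \<alpha>" for \<beta>
      by (rule quasi_step[OF pf lp rq Xd YX Neq Nt Wd nd Ul hyp zX x t that fx])
    have nm: "f (x + t *\<^sub>R d) \<noteq> -\<infinity>" using pf unfolding proper_fun_def by blast
    show "f (x + t *\<^sub>R d) \<le> f x"
    proof (cases "f (x + t *\<^sub>R d)")
      case PInf thus ?thesis using b[of "\<alpha>/2"] al by simp
    next
      case MInf thus ?thesis using nm by simp
    next
      case (real c)
      show ?thesis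
      proof (rule ccontr)
        assume "\<not> ?thesis"
        hence cg: "c > fx" using real fx by simp
        define \<beta> where "\<beta> = min (\<alpha>/2) ((c - fx) / (2 * t))"
        have bp: "0 < \<beta>" "\<beta> < \<alpha>" unfolding \<beta>_def using al cg t by auto
        have "\<beta> * t \<le> (c - fx) / (2 * t) * t" unfolding \<beta>_def using t by (intro mult_right_mono) auto
        also have "\<dots> = (c - fx) / 2" using t by simp
        finally have "\<beta> * t \<le> (c - fx) / 2" .
        moreover have "c \<le> fx + \<beta> * t" using b[OF bp] real by simp
        moreover have g: "\<And>B::real. B \<le> (c - fx) / 2 \<Longrightarrow> c \<le> fx + B \<Longrightarrow> fx < c \<Longrightarrow> False" by simp
        ultimately show False using cg by blast
      qed
    qed
  qed
  hence "d \<in> Kq f" unfolding Kq_def by simp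
  hence "d = 0" using dc K by blast
  thus False using nd by simp
qed
lemma backward:
  fixes f :: "'a::euclidean_space \<Rightarrow> ereal"
  assumes pf: "proper_fun f" and lf: "lsc_fun f" and cX: "closed X" and Xd: "X \<subseteq> edom f"
    and al: "\<alpha> > 0" and rq: "robustly_quasiconvex \<alpha> f"
    and S0: "Sol f X 0 = {z}" and K: "asymptotic_cone X \<inter> Kq f = {0}"
  shows "lsc_setvalued_at (Sol f X) 0"
proof -
  have lp: "lscpt f" by (rule lsc_lscpt[OF lf])
  have zS: "z \<in> Sol f X 0" using S0 by simp
  have zX: "z \<in> X" using zS Sol0_iff by blast
  obtain \<delta> R where dR: "\<delta> > 0" "\<And>u y. norm u < \<delta> \<Longrightarrow> y \<in> X \<Longrightarrow> f_tilt f u y \<le> f_tilt f u z \<Longrightarrow> norm y \<le> R"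
    using bounded_sublevel[OF pf lp rq al Xd zX K] by metis
  have ex: "\<exists>y. y \<in> Sol f X u \<and> norm y \<le> R" if u: "norm u < \<delta>" for u
  proof -
    define KK where "KK = X \<inter> cball 0 R"
    have cK: "compact KK" unfolding KK_def using cX by (intro closed_Int_compact) auto
    have zK: "z \<in> KK" unfolding KK_def using dR(2)[OF u zX] zX by simp
    obtain y where y: "y \<in> KK" "\<forall>w\<in>KK. f_tilt f u y \<le> f_tilt f u w"
      using lscpt_min[OF lscpt_tilt[OF lp] cK] zK by blast
    have "y \<in> Sol f X u" unfolding Sol_def
    proof (intro CollectI conjI ballI)
      show "y \<in> X" using y(1) unfolding KK_def by simp
      fix w assume w: "w \<in> X"
      show "f_tilt f u y \<le> f_tilt f u w"
      proof (cases "norm w \<le> R")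
        case True thus ?thesis using w y(2) unfolding KK_def by simp
      next
        case False
        hence "\<not> f_tilt f u w \<le> f_tilt f u z" using dR(2)[OF u w] by blast
        hence "f_tilt f u z \<le> f_tilt f u w" by simp
        moreover have "f_tilt f u y \<le> f_tilt f u z" using y(2) zK by blast
        ultimately show ?thesis by simp
      qed
    qed
    thus ?thesis using y(1) unfolding KK_def by auto
  qed
  show ?thesis unfolding lsc_setvalued_at_def
  proof (intro conjI allI impI)
    show "Sol f X 0 \<noteq> {}" using S0 by simp
    fix V assume V: "open V \<and> Sol f X 0 \<inter> V \<noteq> {}"
    hence zV: "z \<in> V" using S0 by simp
    show "\<exists>U. open U \<and> 0 \<in> U \<and> (\<forall>u\<in>U. Sol f X u \<inter> V \<noteq> {})"
    proof (rule ccontr)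
      assume "\<not> ?thesis"
      hence "\<forall>k::nat. \<exists>u. u \<in> ball 0 (min \<delta> (1 / real (Suc k))) \<and> Sol f X u \<inter> V = {}"
        using dR(1) by (metis centre_in_ball min_less_iff_conj of_nat_0_less_iff open_ball zero_less_Suc zero_less_divide_1_iff)
      then obtain u where u: "\<And>k. norm (u k) < \<delta>" "\<And>k. norm (u k) < 1 / real (Suc k)"
        "\<And>k. Sol f X (u k) \<inter> V = {}" by (metis mem_ball_0 min_less_iff_conj)
      have "\<forall>k. \<exists>y. y \<in> Sol f X (u k) \<and> norm y \<le> R" using ex u(1) by blast
      then obtain y where y: "\<And>k. y k \<in> Sol f X (u k)" "\<And>k. norm (y k) \<le> R" by metis
      define KK where "KK = (X \<inter> cball 0 R) - V"
      have cK: "compact KK" unfolding KK_def using cX V by (intro compact_diff closed_Int_compact) auto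
      have yK: "\<forall>k. y k \<in> KK"
      proof
        fix k
        have "y k \<notin> V" using y(1)[of k] u(3)[of k] by blast
        moreover have "y k \<in> X" using y(1)[of k] unfolding Sol_def by simp
        ultimately show "y k \<in> KK" unfolding KK_def using y(2)[of k] by simp
      qed
      obtain y' r where y': "y' \<in> KK" and r: "strict_mono r" and yl: "(y \<circ> r) \<longlonglongrightarrow> y'"
        using seq_compactE[OF compact_imp_seq_compact[OF cK] yK] by metis
      have ul: "u \<longlonglongrightarrow> 0" by (rule LIMSEQ_norm_0) (use u(2) in auto)
      have url: "(u \<circ> r) \<longlonglongrightarrow> 0" using LIMSEQ_subseq_LIMSEQ[OF ul r] .
      have y'X: "y' \<in> X" using y' unfolding KK_def by simp
      have "y' \<in> Sol f X 0" unfolding Sol0_iff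
      proof (intro conjI ballI y'X)
        fix w assume w: "w \<in> X"
        obtain fw where fw: "f w = ereal fw" using edom_real[OF pf] w Xd by blast
        define rr where "rr k = fw + inner ((u \<circ> r) k) ((y \<circ> r) k - w)" for k
        have rl: "rr \<longlonglongrightarrow> fw + inner 0 (y' - w)" unfolding rr_def by (intro tendsto_intros url yl)
        have ev: "eventually (\<lambda>k. f ((y \<circ> r) k) \<le> ereal (rr k)) sequentially"
        proof (rule always_eventually, rule allI)
          fix k
          have yk: "y (r k) \<in> X" "f_tilt f (u (r k)) (y (r k)) \<le> f_tilt f (u (r k)) w"
            using y(1)[of "r k"] w unfolding Sol_def by auto
          obtain b where b: "f (y (r k)) = ereal b" using edom_real[OF pf] yk(1) Xd by blast
          have "b - inner (u (r k)) (y (r k)) \<le> fw - inner (u (r k)) w" using yk(2) b fw unfolding f_tilt_def by simp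
          hence "b \<le> rr k" unfolding rr_def by (simp add: inner_diff_right)
          thus "f ((y \<circ> r) k) \<le> ereal (rr k)" using b by simp
        qed
        have "f y' \<le> ereal (fw + inner 0 (y' - w))" by (rule lscpt_seq[OF lp yl ev rl])
        thus "f y' \<le> f w" using fw by simp
      qed
      hence "y' = z" using S0 by simp
      thus False using y' zV unfolding KK_def by simp
    qed
  qed
qed

theorem mainTheorem12:
  fixes f :: "'a::euclidean_space \<Rightarrow> ereal" and X :: "'a set" and \<alpha> :: real
  assumes "proper_fun f" and "lsc_fun f"
    and "closed X" and "X \<noteq> {}" and "\<not> bounded (edom f \<inter> X)"
    and "convex X" and "\<alpha> > 0" and "robustly_quasiconvex \<alpha> f"
    and "X \<subseteq> edom f"
  shows "lsc_setvalued_at (Sol f X) 0 \<longleftrightarrow>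
           ((\<exists>z. Sol f X 0 = {z}) \<and> asymptotic_cone X \<inter> Kq f = {0})"
proof
  assume "lsc_setvalued_at (Sol f X) 0"
  thus "(\<exists>z. Sol f X 0 = {z}) \<and> asymptotic_cone X \<inter> Kq f = {0}"
    using forward assms by blast
next
  assume h: "(\<exists>z. Sol f X 0 = {z}) \<and> asymptotic_cone X \<inter> Kq f = {0}"
  then obtain z where "Sol f X 0 = {z}" by blast
  thus "lsc_setvalued_at (Sol f X) 0" using backward[OF assms(1,2,3,9,7,8)] h by blast
qed

end
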